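(* Let $0<A<B$, let $z\in \mathbb{C}\setminus\{0\}$ and $Y>0$. Then $$\int_{-\pi}^{\pi} \int_{A}^{B} \min\left\{\|\Im(zRe^{\theta i})\|^{-1}, Y\right\}^{1/2} \cdot \min\left\{\|\Re(zRe^{\theta i})\|^{-1}, Y\right\}^{1/2} \, dR \, d\theta \ll_{A,B} \max\{1,|z|^{-1}\}\log (2+Y),$$ where the implied constant depends only on $A$ and $B$.
   Context: For $x\in\mathbb{R}$, $\|x\|$ denotes the distance from $x$ to the nearest integer (with $\|x\|^{-1}=\infty$ if $x\in\mathbb{Z}$, so the minimum is then $Y$). *)

theory Defs
  imports "HOL-Analysis.Analysis"
begin

definition dnint :: "real \<Rightarrow> real" where
  "dnint x = \<bar>x - of_int (round x)\<bar>"

text \<open>min of the inverse distance to the nearest integer and Y, with the convention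
  that the inverse is infinite (so the minimum is Y) when x is an integer.\<close>
definition minY :: "real \<Rightarrow> real \<Rightarrow> real" where
  "minY Y x = (if dnint x = 0 then Y else min (1 / dnint x) Y)"

end

theory Submission
  imports Defs
begin


lemma dnint_le: "dnint x \<le> \<bar>x - of_int n\<bar>"
  unfolding dnint_def by (rule round_diff_minimal)

lemma dnint_nonneg: "0 \<le> dnint x" unfolding dnint_def by simp

lemma dnint_half: "dnint x \<le> 1/2"
  unfolding dnint_def using of_int_round_abs_le[of x] by linarith

lemma dnint_eq: assumes "\<bar>x - of_int n\<bar> \<le> 1/2" shows "dnint x = \<bar>x - of_int n\<bar>"
proof -
  have "\<bar>x - of_int n\<bar> \<le> dnint x"
  proof (cases "round x = n")
    case True then show ?thesis by (simp add: dnint_def)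
  next
    case False
    then have "\<bar>of_int (round x) - (of_int n::real)\<bar> \<ge> 1"
      by (metis of_int_1_le_iff of_int_abs of_int_diff zero_less_abs_iff right_minus_eq int_one_le_iff_zero_less)
    then show ?thesis unfolding dnint_def using assms by linarith
  qed
  with dnint_le[of x n] show ?thesis by linarith
qed

lemma dnint_minus: "dnint (-x) = dnint x"
proof -
  have "dnint (-x) \<le> dnint x" using dnint_le[of "-x" "- round x"] by (simp add: dnint_def)
  moreover have "dnint x \<le> dnint (-x)" using dnint_le[of "x" "- round (-x)"] by (simp add: dnint_def)
  ultimately show ?thesis by linarith
qed

lemma dnint_lip: "\<bar>dnint x - dnint y\<bar> \<le> \<bar>x - y\<bar>"
proof -
  have "dnint x \<le> dnint y + \<bar>x - y\<bar>" using dnint_le[of x "round y"] unfolding dnint_def by linarith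
  moreover have "dnint y \<le> dnint x + \<bar>x - y\<bar>" using dnint_le[of y "round x"] unfolding dnint_def by linarith
  ultimately show ?thesis by linarith
qed

lemma dnint_shift: "dnint (x + of_int n) = dnint x"
proof -
  have "dnint (x + of_int n) \<le> dnint x" using dnint_le[of "x + of_int n" "round x + n"] by (simp add: dnint_def)
  moreover have "dnint x \<le> dnint (x + of_int n)" using dnint_le[of "x" "round (x + of_int n) - n"] by (simp add: dnint_def)
  ultimately show ?thesis by linarith
qed

lemma continuous_on_dnint: "continuous_on S dnint"
proof -
  have "isCont dnint x" for x
    unfolding continuous_at_eps_delta dist_real_def
    using dnint_lip le_less_trans by blast
  then show ?thesis by (simp add: continuous_at_imp_continuous_on)
qed

lemma sin_lb: assumes "0 \<le> x" "x \<le> pi/2" shows "x / 2 \<le> sin x"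
proof -
  have "\<bar>sin x - (\<Sum>m<3. sin_coeff m * x ^ m)\<bar> \<le> inverse (fact 3) * \<bar>x\<bar> ^ 3"
    by (rule Maclaurin_sin_bound)
  moreover have "(\<Sum>m<3. sin_coeff m * x ^ m) = x"
    by (simp add: sin_coeff_def eval_nat_numeral)
  ultimately have "\<bar>sin x - x\<bar> \<le> x^3/6" using assms by (simp add: divide_simps fact_numeral)
  then have "sin x \<ge> x - x^3/6" by linarith
  moreover have "x^2 \<le> 3" proof -
    have "pi \<le> 3.2" using pi_approx by simp
    then have "x \<le> 1.6" using assms by linarith
    then have "x*x \<le> 1.6*1.6" using assms by (intro mult_mono) auto
    then show ?thesis by (simp add: power2_eq_square)
  qed
  then have "x * x^2 \<le> x * 3" using assms by (intro mult_left_mono) auto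
  then have "x^3/6 \<le> x/2" by (simp add: power3_eq_cube power2_eq_square)
  ultimately show ?thesis by linarith
qed

lemma abs_sin_ge: "dnint (y / pi) \<le> \<bar>sin y\<bar>"
proof -
  define n where "n = round (y/pi)"
  define t where "t = y/pi - of_int n"
  have t: "\<bar>t\<bar> \<le> 1/2" using of_int_round_abs_le[of "y/pi"] unfolding t_def n_def by linarith
  have d: "dnint (y/pi) = \<bar>t\<bar>" unfolding dnint_def t_def n_def by simp
  have y: "y = pi * t + pi * of_int n" unfolding t_def by (simp add: field_simps)
  have c: "\<bar>cos (pi * of_int n)\<bar> = 1"
    using sin_cos_squared_add[of "pi * of_int n"] by (simp add: abs_square_eq_1)
  have "\<bar>sin y\<bar> = \<bar>sin (pi * t)\<bar>" unfolding y sin_add using c by (simp add: abs_mult)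
  also have "\<bar>sin (pi * t)\<bar> = sin (pi * \<bar>t\<bar>)"
  proof (cases "t \<ge> 0")
    case True
    then have "0 \<le> sin (pi * t)" using t by (intro sin_ge_zero) auto
    then show ?thesis using True by simp
  next
    case False
    have "pi * (-t) \<le> pi * (1/2)" using t False by (intro mult_left_mono) auto
    moreover have "pi * t \<le> 0" using False by (simp add: mult_nonneg_nonpos)
    ultimately have "0 \<le> sin (pi * (-t))" using t False pi_gt_zero by (intro sin_ge_zero) auto
    then show ?thesis using False by simp
  qed
  also have "sin (pi * \<bar>t\<bar>) \<ge> pi * \<bar>t\<bar> / 2" using t by (intro sin_lb) auto
  finally have "\<bar>sin y\<bar> \<ge> pi * \<bar>t\<bar> / 2" .
  moreover have "pi * \<bar>t\<bar> / 2 \<ge> \<bar>t\<bar>" using pi_gt3 mult_right_mono[of 2 pi "\<bar>t\<bar>"] by (simp add: mult.commute)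
  ultimately show ?thesis using d by linarith
qed



lemma ftc_half_r:
  fixes \<alpha> k a b c :: real
  assumes "\<alpha> > 0" "k > 0" "a \<le> b" "\<forall>x\<in>{a..b}. 0 \<le> \<alpha>*x+c"
  shows "((\<lambda>x. 1/(k*(\<alpha>*x+c)+1)) has_integral (ln(1+k*(\<alpha>*b+c))/(k*\<alpha>) - ln(1+k*(\<alpha>*a+c))/(k*\<alpha>))) {a..b}"
proof -
  define F where "F = (\<lambda>x. ln(1+k*(\<alpha>*x+c))/(k*\<alpha>))"
  have "((\<lambda>x. 1/(k*(\<alpha>*x+c)+1)) has_integral (F b - F a)) {a..b}"
  proof (rule fundamental_theorem_of_calculus)
    show "a \<le> b" by fact
    fix x assume x: "x \<in> {a..b}"
    have pos: "0 < 1 + k*(\<alpha>*x+c)" using assms x by (smt (verit) mult_nonneg_nonneg)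
    have "(F has_real_derivative (1/(k*(\<alpha>*x+c)+1))) (at x within {a..b})"
      unfolding F_def using pos assms by (auto intro!: derivative_eq_intros simp: divide_simps)
    then show "(F has_vector_derivative (1/(k*(\<alpha>*x+c)+1))) (at x within {a..b})"
      by (simp add: has_real_derivative_iff_has_vector_derivative)
  qed
  then show ?thesis unfolding F_def .
qed

lemma ftc_half_l:
  fixes \<alpha> k a b c :: real
  assumes "\<alpha> > 0" "k > 0" "a \<le> b" "\<forall>x\<in>{a..b}. \<alpha>*x+c \<le> 0"
  shows "((\<lambda>x. 1/(1 - k*(\<alpha>*x+c))) has_integral (ln(1-k*(\<alpha>*a+c))/(k*\<alpha>) - ln(1-k*(\<alpha>*b+c))/(k*\<alpha>))) {a..b}"
proof -
  define F where "F = (\<lambda>x. - ln(1-k*(\<alpha>*x+c))/(k*\<alpha>))"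
  have "((\<lambda>x. 1/(1 - k*(\<alpha>*x+c))) has_integral (F b - F a)) {a..b}"
  proof (rule fundamental_theorem_of_calculus)
    show "a \<le> b" by fact
    fix x assume x: "x \<in> {a..b}"
    have pos: "0 < 1 - k*(\<alpha>*x+c)" using assms x by (smt (verit) mult_nonneg_nonpos)
    have "(F has_real_derivative (1/(1 - k*(\<alpha>*x+c)))) (at x within {a..b})"
      unfolding F_def using pos assms by (auto intro!: derivative_eq_intros simp: divide_simps)
    then show "(F has_vector_derivative (1/(1 - k*(\<alpha>*x+c)))) (at x within {a..b})"
      by (simp add: has_real_derivative_iff_has_vector_derivative)
  qed
  then show ?thesis unfolding F_def by (simp add: algebra_simps)
qed

lemma cell_integral:
  fixes \<alpha> k \<beta> :: real
  assumes a: "\<alpha> > 0" and k: "k > 0"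
  shows "((\<lambda>x. 1/(k * dnint(\<alpha>*x+\<beta>)+1)) has_integral (2*ln(1+k/2)/(k*\<alpha>)))
     {(of_int n - 1/2 - \<beta>)/\<alpha> .. (of_int n + 1/2 - \<beta>)/\<alpha>}"
proof -
  define l where "l = (of_int n - 1/2 - \<beta>)/\<alpha>"
  define m where "m = (of_int n - \<beta>)/\<alpha>"
  define r where "r = (of_int n + 1/2 - \<beta>)/\<alpha>"
  define c where "c = \<beta> - of_int n"
  have lm: "l \<le> m" and mr: "m \<le> r" using a unfolding l_def m_def r_def by (auto simp: divide_right_mono)
  have eqs: "\<alpha>*l + c = -1/2" "\<alpha>*m+c = 0" "\<alpha>*r+c = 1/2"
    using a unfolding l_def m_def r_def c_def by (auto simp: field_simps)
  have "((\<lambda>x. 1/(k*(\<alpha>*x+c)+1)) has_integral (ln(1+k*(\<alpha>*r+c))/(k*\<alpha>) - ln(1+k*(\<alpha>*m+c))/(k*\<alpha>))) {m..r}"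
  proof (rule ftc_half_r[OF a k mr], intro ballI)
    fix x assume "x \<in> {m..r}"
    then have "\<alpha>*m \<le> \<alpha>*x" using a by auto
    then show "0 \<le> \<alpha>*x+c" using eqs by linarith
  qed
  then have "((\<lambda>x. 1/(k*(\<alpha>*x+c)+1)) has_integral (ln(1+k/2)/(k*\<alpha>))) {m..r}"
    using eqs by simp
  then have R: "((\<lambda>x. 1/(k * dnint(\<alpha>*x+\<beta>)+1)) has_integral (ln(1+k/2)/(k*\<alpha>))) {m..r}"
  proof (rule has_integral_eq[rotated])
    fix x assume "x \<in> {m..r}"
    then have "\<alpha>*m \<le> \<alpha>*x" "\<alpha>*x \<le> \<alpha>*r" using a by auto
    then have "0 \<le> \<alpha>*x+c" "\<alpha>*x+c \<le> 1/2" using eqs by linarith+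
    then have "dnint(\<alpha>*x+\<beta>) = \<alpha>*x+c" using dnint_eq[of "\<alpha>*x+\<beta>" n] unfolding c_def by (simp add: algebra_simps)
    then show "1/(k*(\<alpha>*x+c)+1) = 1/(k * dnint(\<alpha>*x+\<beta>)+1)" by simp
  qed
  have "((\<lambda>x. 1/(1 - k*(\<alpha>*x+c))) has_integral (ln(1-k*(\<alpha>*l+c))/(k*\<alpha>) - ln(1-k*(\<alpha>*m+c))/(k*\<alpha>))) {l..m}"
  proof (rule ftc_half_l[OF a k lm], intro ballI)
    fix x assume "x \<in> {l..m}"
    then have "\<alpha>*x \<le> \<alpha>*m" using a by auto
    then show "\<alpha>*x+c \<le> 0" using eqs by linarith
  qed
  then have "((\<lambda>x. 1/(1 - k*(\<alpha>*x+c))) has_integral (ln(1+k/2)/(k*\<alpha>))) {l..m}"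
    using eqs by simp
  then have L: "((\<lambda>x. 1/(k * dnint(\<alpha>*x+\<beta>)+1)) has_integral (ln(1+k/2)/(k*\<alpha>))) {l..m}"
  proof (rule has_integral_eq[rotated])
    fix x assume "x \<in> {l..m}"
    then have "\<alpha>*l \<le> \<alpha>*x" "\<alpha>*x \<le> \<alpha>*m" using a by auto
    then have "-1/2 \<le> \<alpha>*x+c" "\<alpha>*x+c \<le> 0" using eqs by linarith+
    then have "dnint(\<alpha>*x+\<beta>) = -(\<alpha>*x+c)" using dnint_eq[of "\<alpha>*x+\<beta>" n] unfolding c_def by (simp add: algebra_simps)
    then show "1/(1 - k*(\<alpha>*x+c)) = 1/(k * dnint(\<alpha>*x+\<beta>)+1)" by (simp add: right_diff_distrib distrib_left)
  qed
  have "((\<lambda>x. 1/(k * dnint(\<alpha>*x+\<beta>)+1)) has_integral (ln(1+k/2)/(k*\<alpha>) + ln(1+k/2)/(k*\<alpha>))) {l..r}"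
    by (rule has_integral_combine[OF lm mr L R])
  then show ?thesis unfolding l_def r_def by (simp add: mult.commute)
qed



lemma hcont: fixes k \<alpha> \<beta> :: real assumes "k > 0"
  shows "continuous_on S (\<lambda>x. 1/(k*dnint(\<alpha>*x+\<beta>)+1))"
proof -
  have "continuous_on S (\<lambda>x. dnint(\<alpha>*x+\<beta>))"
    by (rule continuous_on_compose2[OF continuous_on_dnint[of UNIV]]) (auto intro!: continuous_intros)
  moreover have "\<forall>x. k*dnint(\<alpha>*x+\<beta>)+1 \<noteq> 0" using assms dnint_nonneg
    by (smt (verit) mult_nonneg_nonneg)
  ultimately show ?thesis by (auto intro!: continuous_intros)
qed

lemma periodic_bound:
  fixes \<alpha> k \<beta> p q :: real
  assumes a: "\<alpha> > 0" and k: "k > 0" and pq: "p \<le> q"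
  shows "integral {p..q} (\<lambda>x. 1/(k*dnint(\<alpha>*x+\<beta>)+1)) \<le> (q-p+2/\<alpha>)*(2*ln(1+k/2)/k)"
proof -
  define h where "h = (\<lambda>x. 1/(k*dnint(\<alpha>*x+\<beta>)+1))"
  define P where "P = 2*ln(1+k/2)/(k*\<alpha>)"
  define m where "m = \<lfloor>\<alpha>*p+\<beta>+1/2\<rfloor>"
  define l0 where "l0 = (of_int m - 1/2 - \<beta>)/\<alpha>"
  have ind: "(h has_integral (of_nat N * P)) {l0 .. l0 + of_nat N/\<alpha>}" for N
  proof (induction N)
    case 0 then show ?case by (simp add: has_integral_refl)
  next
    case (Suc N)
    have c: "(h has_integral P) {(of_int (m + int N) - 1/2 - \<beta>)/\<alpha> .. (of_int (m + int N) + 1/2 - \<beta>)/\<alpha>}"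
      unfolding h_def P_def by (rule cell_integral[OF a k])
    have e1: "(of_int (m + int N) - 1/2 - \<beta>)/\<alpha> = l0 + of_nat N/\<alpha>"
      unfolding l0_def using a by (simp add: field_simps)
    have e2: "(of_int (m + int N) + 1/2 - \<beta>)/\<alpha> = l0 + of_nat (Suc N)/\<alpha>"
      unfolding l0_def using a by (simp add: field_simps)
    have "(h has_integral (of_nat N * P + P)) {l0 .. l0 + of_nat (Suc N)/\<alpha>}"
      by (rule has_integral_combine[OF _ _ Suc c[unfolded e1 e2]]) (use a in \<open>auto simp: divide_right_mono\<close>)
    then show ?case by (simp add: algebra_simps)
  qed
  define N0 where "N0 = nat \<lceil>\<alpha>*(q-p)\<rceil> + 1"
  have N0: "real N0 \<le> \<alpha>*(q-p) + 2" "real N0 \<ge> \<alpha>*(q-p) + 1"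
    unfolding N0_def using a pq by (auto simp: of_nat_nat) linarith+
  have "of_int m > \<alpha>*p+\<beta>-1/2" "of_int m \<le> \<alpha>*p+\<beta>+1/2" unfolding m_def by linarith+
  then have l0p: "l0 \<le> p" and ql: "q \<le> l0 + of_nat N0/\<alpha>"
    unfolding l0_def using a N0 by (auto simp: field_simps)
  have hint: "h integrable_on {a..b}" for a b unfolding h_def
    by (rule integrable_continuous_real) (rule hcont[OF k])
  have "integral {p..q} h \<le> integral {l0 .. l0 + of_nat N0/\<alpha>} h"
  proof (rule integral_subset_le)
    show "{p..q} \<subseteq> {l0..l0 + real N0 / \<alpha>}" using l0p ql by auto
    show "\<forall>x\<in>{l0..l0 + real N0 / \<alpha>}. 0 \<le> h x" unfolding h_def using k dnint_nonneg
      by (smt (verit) divide_nonneg_nonneg mult_nonneg_nonneg)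
  qed (rule hint)+
  also have "\<dots> = of_nat N0 * P" using ind[of N0] by (rule integral_unique)
  also have "\<dots> \<le> (\<alpha>*(q-p)+2) * P"
    using N0 k a by (intro mult_right_mono) (auto simp: P_def)
  also have "\<dots> = (q-p+2/\<alpha>)*(2*ln(1+k/2)/k)" unfolding P_def using a k by (simp add: field_simps)
  finally show ?thesis unfolding h_def .
qed



lemma hcont2: fixes k \<alpha> C :: real assumes "k > 0"
  shows "continuous_on S (\<lambda>x. C/(k*dnint(\<alpha>*x)+1))"
proof -
  have "continuous_on S (\<lambda>x. dnint(\<alpha>*x))"
    by (rule continuous_on_compose2[OF continuous_on_dnint[of UNIV]]) (auto intro!: continuous_intros)
  moreover have "\<forall>x. k*dnint(\<alpha>*x)+1 \<noteq> 0" using assms dnint_nonneg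
    by (smt (verit) mult_nonneg_nonneg)
  ultimately show ?thesis by (auto intro!: continuous_intros)
qed

lemma Rpart:
  fixes A B Y c :: real
  assumes A: "0 < A" and AB: "A < B" and Y: "Y > 0"
  shows "integral {A..B} (\<lambda>R. 2*Y/(Y*dnint(c*R)+1)) \<le> 2*Y*(B-A)/(Y*\<bar>c\<bar>*A+1) + 20*B*ln(1+Y/2)"
proof -
  have lnpos: "0 \<le> ln(1+Y/2)" using Y by simp
  have t1: "0 \<le> 2*Y*(B-A)/(Y*\<bar>c\<bar>*A+1)" using A AB Y by (simp add: zero_le_mult_iff)
  show ?thesis
  proof (cases "\<bar>c\<bar>*B \<ge> 1/2")
    case True
    then have c: "\<bar>c\<bar> > 0" using A AB by (cases "c = 0") auto
    have eq: "dnint(c*R) = dnint(\<bar>c\<bar>*R+0)" for R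
      by (cases "c \<ge> 0") (auto simp: dnint_minus[of "c*R", symmetric])
    have "integral {A..B} (\<lambda>R. 2*Y/(Y*dnint(c*R)+1)) = 2*Y * integral {A..B} (\<lambda>R. 1/(Y*dnint(\<bar>c\<bar>*R+0)+1))"
      by (simp add: eq integral_mult_right[symmetric])
    also have "\<dots> \<le> 2*Y * ((B-A+2/\<bar>c\<bar>)*(2*ln(1+Y/2)/Y))"
      using periodic_bound[OF c Y, where \<beta>=0 and p=A and q=B] less_imp_le[OF AB] AB Y by (intro mult_left_mono) (auto simp del: add_0_right)
    also have "\<dots> = 4*(B-A+2/\<bar>c\<bar>)*ln(1+Y/2)" using Y by simp
    also have "\<dots> \<le> 4*(5*B)*ln(1+Y/2)"
    proof -
      have "1/\<bar>c\<bar> \<le> 2*B" using True c A AB by (simp add: field_simps)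
      then have "B-A+2/\<bar>c\<bar> \<le> 5*B" using A AB by simp
      then show ?thesis using lnpos by (intro mult_right_mono) auto
    qed
    finally show ?thesis using t1 by linarith
  next
    case False
    have pt: "2*Y/(Y*dnint(c*R)+1) \<le> 2*Y/(Y*\<bar>c\<bar>*A+1)" if R: "R \<in> {A..B}" for R
    proof -
      have "\<bar>c*R\<bar> \<le> \<bar>c\<bar>*B" using R A by (auto simp: abs_mult intro: mult_left_mono)
      then have "dnint (c*R) = \<bar>c*R\<bar>" using dnint_eq[of "c*R" 0] False by simp
      also have "\<dots> \<ge> \<bar>c\<bar>*A" using R A by (auto simp: abs_mult intro: mult_left_mono)
      finally have "Y*\<bar>c\<bar>*A \<le> Y*dnint(c*R)" using Y by (simp add: mult.assoc)
      moreover have "0 < Y*\<bar>c\<bar>*A+1" using Y A by (smt (verit) mult_nonneg_nonneg abs_ge_zero)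
      moreover have "Y*\<bar>c\<bar>*A+1 \<le> Y*dnint(c*R)+1" using \<open>Y*\<bar>c\<bar>*A \<le> Y*dnint(c*R)\<close> by simp
      ultimately show ?thesis using Y divide_left_mono[of "Y*\<bar>c\<bar>*A+1" "Y*dnint(c*R)+1" "2*Y"] by (smt (verit) mult_pos_pos)
    qed
    have "integral {A..B} (\<lambda>R. 2*Y/(Y*dnint(c*R)+1)) \<le> integral {A..B} (\<lambda>R. 2*Y/(Y*\<bar>c\<bar>*A+1))"
      by (rule integral_le) (auto intro!: integrable_continuous_real hcont2[OF Y] pt)
    also have "\<dots> = 2*Y*(B-A)/(Y*\<bar>c\<bar>*A+1)" using AB by simp
    finally show ?thesis using lnpos A AB by (smt (verit) mult_nonneg_nonneg)
  qed
qed



lemma lbint_le: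
  fixes f g :: "real \<Rightarrow> real" and a b :: real
  assumes ab: "a \<le> b" and gc: "continuous_on {a..b} g"
    and fg: "\<forall>x\<in>{a..b}. f x \<le> g x" and g0: "\<forall>x\<in>{a..b}. 0 \<le> g x"
  shows "(LBINT x=a..b. f x) \<le> integral {a..b} g"
proof -
  have gi: "set_integrable lborel {a..b} g" by (rule borel_integrable_atLeastAtMost'[OF gc])
  have gi': "set_integrable lborel {a<..<b} g" by (rule set_integrable_subset[OF gi]) auto
  have eqg: "(LBINT x=a..b. g x) = integral {a..b} g" by (rule interval_integral_eq_integral[OF ab gi])
  have "(LBINT x=a..b. f x) \<le> (LBINT x=a..b. g x)"
  proof (cases "set_integrable lborel {a<..<b} f")
    case True
    have "(LINT x:{a<..<b}|lborel. f x) \<le> (LINT x:{a<..<b}|lborel. g x)"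
      by (rule set_integral_mono[OF True gi']) (use fg in auto)
    then show ?thesis using ab by (simp add: interval_lebesgue_integral_le_eq)
  next
    case False
    then have "(LINT x:{a<..<b}|lborel. f x) = 0"
      unfolding set_lebesgue_integral_def set_integrable_def by (rule not_integrable_integral_eq)
    moreover have "0 \<le> (LINT x:{a<..<b}|lborel. g x)"
      unfolding set_lebesgue_integral_def using g0
      by (intro Bochner_Integration.integral_nonneg) (auto simp: indicator_def)
    ultimately show ?thesis using ab by (simp add: interval_lebesgue_integral_le_eq)
  qed
  then show ?thesis using eqg by simp
qed

lemma minY_bound: assumes "Y > 0" shows "minY Y x \<le> 2*Y/(Y*dnint x+1)" "0 \<le> minY Y x"
proof -
  have d: "0 \<le> dnint x" by (rule dnint_nonneg)
  show "0 \<le> minY Y x" unfolding minY_def using assms d by auto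
  show "minY Y x \<le> 2*Y/(Y*dnint x+1)"
  proof (cases "dnint x = 0")
    case True then show ?thesis unfolding minY_def using assms by simp
  next
    case False
    then have dp: "dnint x > 0" using d by simp
    have pos: "Y*dnint x+1 > 0" using assms dp by (simp add: add_pos_pos)
    show ?thesis
    proof (cases "Y*dnint x \<le> 1")
      case True
      then have "Y \<le> 2*Y/(Y*dnint x+1)" using pos assms by (simp add: field_simps)
      then show ?thesis unfolding minY_def using False by simp
    next
      case False
      then have "1/dnint x \<le> 2*Y/(Y*dnint x+1)" using pos dp by (simp add: field_simps)
      then show ?thesis unfolding minY_def using \<open>dnint x \<noteq> 0\<close> by simp
    qed
  qed
qed

lemma sqrt_amgm: fixes a b :: real assumes "0 \<le> a" "0 \<le> b" shows "sqrt a * sqrt b \<le> (a+b)/2"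
proof -
  have "0 \<le> (sqrt a - sqrt b)^2" by simp
  then show ?thesis using assms by (simp add: power2_eq_square algebra_simps)
qed



lemma re_im_rot:
  fixes z :: complex
  shows "Re (z * of_real R * cis \<theta>) = R * (cmod z * cos (\<theta> + Arg z))"
    and "Im (z * of_real R * cis \<theta>) = R * (cmod z * sin (\<theta> + Arg z))"
proof -
  have z: "z = of_real (cmod z) * cis (Arg z)" using rcis_cmod_Arg[of z] by (simp add: rcis_def)
  have e: "z * of_real R * cis \<theta> = of_real (cmod z * R) * cis (\<theta> + Arg z)"
    by (subst z) (simp add: cis_mult algebra_simps)
  show "Re (z * of_real R * cis \<theta>) = R * (cmod z * cos (\<theta> + Arg z))" unfolding e by simp
  show "Im (z * of_real R * cis \<theta>) = R * (cmod z * sin (\<theta> + Arg z))" unfolding e by simp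
qed

lemma inner_bound:
  fixes A B Y cI cR :: real
  assumes A: "0 < A" and AB: "A < B" and Y: "Y > 0"
    and hI: "\<And>R. Im (w R) = cI * R" and hR: "\<And>R. Re (w R) = cR * R"
  shows "(LBINT R=A..B. sqrt (minY Y (Im (w R))) * sqrt (minY Y (Re (w R))))
     \<le> Y*(B-A)/(Y*\<bar>cI\<bar>*A+1) + Y*(B-A)/(Y*\<bar>cR\<bar>*A+1) + 20*B*ln(1+Y/2)"
proof -
  define GI where "GI = (\<lambda>R. 2*Y/(Y*dnint(cI*R)+1))"
  define GR where "GR = (\<lambda>R. 2*Y/(Y*dnint(cR*R)+1))"
  have cI: "continuous_on {A..B} GI" unfolding GI_def by (rule hcont2[OF Y])
  have cR: "continuous_on {A..B} GR" unfolding GR_def by (rule hcont2[OF Y])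
  have GI0: "0 \<le> GI R" for R unfolding GI_def using Y dnint_nonneg[of "cI*R"]
    by (smt (verit) divide_nonneg_nonneg mult_nonneg_nonneg)
  have GR0: "0 \<le> GR R" for R unfolding GR_def using Y dnint_nonneg[of "cR*R"]
    by (smt (verit) divide_nonneg_nonneg mult_nonneg_nonneg)
  have "(LBINT R=A..B. sqrt (minY Y (Im (w R))) * sqrt (minY Y (Re (w R))))
      \<le> integral {A..B} (\<lambda>R. (GI R + GR R)/2)"
  proof (rule lbint_le)
    show "A \<le> B" using AB by simp
    show "continuous_on {A..B} (\<lambda>R. (GI R + GR R) / 2)" using cI cR by (intro continuous_intros) auto
    show "\<forall>x\<in>{A..B}. 0 \<le> (GI x + GR x) / 2" using GI0 GR0 by simp
    show "\<forall>x\<in>{A..B}. sqrt (minY Y (Im (w x))) * sqrt (minY Y (Re (w x))) \<le> (GI x + GR x) / 2"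
    proof
      fix x
      have "sqrt (minY Y (Im (w x))) * sqrt (minY Y (Re (w x))) \<le> (minY Y (Im (w x)) + minY Y (Re (w x)))/2"
        by (rule sqrt_amgm) (use minY_bound[OF Y] in auto)
      also have "\<dots> \<le> (GI x + GR x)/2" unfolding GI_def GR_def hI hR
        using minY_bound(1)[OF Y, of "cI*x"] minY_bound(1)[OF Y, of "cR*x"] by (intro divide_right_mono add_mono) auto
      finally show "sqrt (minY Y (Im (w x))) * sqrt (minY Y (Re (w x))) \<le> (GI x + GR x) / 2" .
    qed
  qed
  also have "integral {A..B} (\<lambda>R. (GI R + GR R)/2) = (integral {A..B} GI + integral {A..B} GR)/2"
    using integrable_continuous_real[OF cI] integrable_continuous_real[OF cR]
    by (simp add: integral_add integral_divide)
  also have "\<dots> \<le> ((2*Y*(B-A)/(Y*\<bar>cI\<bar>*A+1) + 20*B*ln(1+Y/2)) + (2*Y*(B-A)/(Y*\<bar>cR\<bar>*A+1) + 20*B*ln(1+Y/2)))/2"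
    using Rpart[OF A AB Y, of cI] Rpart[OF A AB Y, of cR] unfolding GI_def GR_def by (intro divide_right_mono add_mono) auto
  also have "\<dots> = Y*(B-A)/(Y*\<bar>cI\<bar>*A+1) + Y*(B-A)/(Y*\<bar>cR\<bar>*A+1) + 20*B*ln(1+Y/2)"
    by (simp add: field_simps)
  finally show ?thesis .
qed



lemma div_helper: fixes c u v :: real assumes "0 \<le> c" "0 \<le> u" "u \<le> v"
  shows "c/(v+1) \<le> c*(1/(u+1))"
  using assms by (simp add: divide_left_mono)

lemma final_arith:
  fixes A B Y r K :: real
  assumes A: "0 < A" and AB: "A < B" and Y: "Y > 0" and r: "r > 0" and K: "K = A*Y*r"
  shows "2*(Y*(B-A)*((pi - -pi + 2/(1/pi))*(2*ln(1+K/2)/K))) + 2*pi*(20*B*ln(1+Y/2))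
    \<le> (16*pi*(B-A)/A*(A/ln 2 + 1) + 40*pi*B) * max 1 (1/r) * ln(2+Y)"
proof -
  define M where "M = max 1 (1/r)"
  define L where "L = ln(2+Y)"
  have M1: "1 \<le> M" and Mr: "1/r \<le> M" unfolding M_def by auto
  have L2: "ln 2 \<le> L" unfolding L_def using Y by simp
  have ln2: "0 < ln (2::real)" by simp
  have Kp: "K > 0" using A Y r K by simp
  have e1: "2*(Y*(B-A)*((pi - -pi + 2/(1/pi))*(2*ln(1+K/2)/K))) = 16*pi*(B-A)/A * (ln(1+K/2)/r)"
    using A Y r K by (simp add: field_simps)
  have a1: "ln(1+K/2) \<le> A*r + ln(1+Y)"
  proof -
    have "ln(1+K/2) \<le> ln((1+A*r)*(1+Y))"
    proof (subst ln_le_cancel_iff)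
      have p: "0 < A*r" "0 < A*(Y*r)" using A Y r by auto
      show "0 < 1 + K/2" using Kp by simp
      show "0 < (1+A*r)*(1+Y)" using p Y by simp
      show "1 + K/2 \<le> (1+A*r)*(1+Y)" using p Y K by (simp add: algebra_simps)
    qed
    have p1: "0 < 1 + A*r" using mult_pos_pos[OF A r] by linarith
    have p2: "0 < 1 + Y" using Y by linarith
    note this = \<open>ln(1+K/2) \<le> ln((1+A*r)*(1+Y))\<close>
    also have "ln((1+A*r)*(1+Y)) = ln(1+A*r) + ln(1+Y)" using p1 p2 by (simp add: ln_mult)
    also have "ln(1+A*r) \<le> A*r" using A r by (intro ln_add_one_self_le_self) simp
    finally show ?thesis by simp
  qed
  have a2: "ln(1+K/2)/r \<le> M*(A + ln(1+Y))"
  proof -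
    have "ln(1+K/2)/r \<le> (A*r + ln(1+Y))/r" using a1 r by (simp add: divide_right_mono)
    also have "\<dots> = A + ln(1+Y)/r" using r by (simp add: field_simps)
    also have "ln(1+Y)/r = (1/r)*ln(1+Y)" by simp
    also have "\<dots> \<le> M*ln(1+Y)" using Mr Y by (intro mult_right_mono) auto
    also have "A \<le> M*A" using M1 A by simp
    finally show ?thesis by (simp add: algebra_simps)
  qed
  have a3: "A + ln(1+Y) \<le> (A/ln 2 + 1)*L"
  proof -
    have "A = A/ln 2 * ln 2" using ln2 by simp
    also have "\<dots> \<le> A/ln 2 * L" using L2 A ln2 by (intro mult_left_mono) auto
    finally have "A \<le> A/ln 2 * L" .
    moreover have "ln(1+Y) \<le> L" unfolding L_def using Y by simp
    ultimately show ?thesis by (simp add: algebra_simps)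
  qed
  have L0: "0 \<le> L" using L2 ln2 by linarith
  have t1: "16*pi*(B-A)/A * (ln(1+K/2)/r) \<le> 16*pi*(B-A)/A * (M*((A/ln 2 + 1)*L))"
  proof (rule mult_left_mono)
    have "M*(A + ln(1+Y)) \<le> M*((A/ln 2 + 1)*L)" using a3 M1 by (intro mult_left_mono) auto
    then show "ln(1+K/2)/r \<le> M*((A/ln 2 + 1)*L)" using a2 by linarith
    show "0 \<le> 16*pi*(B-A)/A" using A AB by simp
  qed
  have t2: "2*pi*(20*B*ln(1+Y/2)) \<le> 40*pi*B*(M*L)"
  proof -
    have "ln(1+Y/2) \<le> L" unfolding L_def using Y by simp
    also have "L \<le> M*L" using M1 L0 by (simp add: mult_le_cancel_right1)
    finally have "ln(1+Y/2) \<le> M*L" .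
    then have "(40*pi*B)*ln(1+Y/2) \<le> (40*pi*B)*(M*L)" using A AB by (intro mult_left_mono) auto
    then show ?thesis by simp
  qed
  show ?thesis unfolding e1 using t1 t2 unfolding M_def[symmetric] L_def[symmetric]
    by (simp add: algebra_simps)
qed



theorem lemma5:
  fixes A B :: real
  assumes "0 < A" and "A < B"
  shows "\<exists>C. \<forall>(z::complex) (Y::real). z \<noteq> 0 \<longrightarrow> Y > 0 \<longrightarrow>
    (LBINT \<theta>=-pi..pi. (LBINT R=A..B.
        sqrt (minY Y (Im (z * of_real R * cis \<theta>))) *
        sqrt (minY Y (Re (z * of_real R * cis \<theta>)))))
    \<le> C * max 1 (1 / cmod z) * ln (2 + Y)"
proof (intro exI allI impI)
  fix z :: complex and Y :: real
  assume z: "z \<noteq> 0" and Y: "Y > 0"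
  note A = assms(1) and AB = assms(2)
  define r where "r = cmod z"
  define \<phi> where "\<phi> = Arg z"
  define K where "K = A*Y*r"
  have r: "r > 0" unfolding r_def using z by simp
  have Kp: "K > 0" unfolding K_def using A Y r by simp
  define DI where "DI = (\<lambda>\<theta>. dnint((1/pi)*\<theta> + \<phi>/pi))"
  define DR where "DR = (\<lambda>\<theta>. dnint((1/pi)*\<theta> + (\<phi>/pi + 1/2)))"
  define J where "J = (\<lambda>\<theta>. Y*(B-A)*(1/(K*DI \<theta>+1)) + Y*(B-A)*(1/(K*DR \<theta>+1)) + 20*B*ln(1+Y/2))"
  have c0: "0 \<le> Y*(B-A)" using Y AB by simp
  have pw: "(LBINT R=A..B. sqrt (minY Y (Im (z * of_real R * cis \<theta>))) *
        sqrt (minY Y (Re (z * of_real R * cis \<theta>)))) \<le> J \<theta>" for \<theta>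
  proof -
    define cI where "cI = r * sin (\<theta> + \<phi>)"
    define cR where "cR = r * cos (\<theta> + \<phi>)"
    have "(LBINT R=A..B. sqrt (minY Y (Im (z * of_real R * cis \<theta>))) *
        sqrt (minY Y (Re (z * of_real R * cis \<theta>))))
      \<le> Y*(B-A)/(Y*\<bar>cI\<bar>*A+1) + Y*(B-A)/(Y*\<bar>cR\<bar>*A+1) + 20*B*ln(1+Y/2)"
      by (rule inner_bound[OF A AB Y, where w="\<lambda>R. z * of_real R * cis \<theta>"])
         (simp_all only: re_im_rot, simp_all add: cI_def cR_def r_def \<phi>_def ac_simps)
    also have "Y*(B-A)/(Y*\<bar>cI\<bar>*A+1) \<le> Y*(B-A)*(1/(K*DI \<theta>+1))"
    proof (rule div_helper[OF c0])
      show "0 \<le> K*DI \<theta>" using Kp dnint_nonneg unfolding DI_def by simp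
      have "DI \<theta> \<le> \<bar>sin (\<theta> + \<phi>)\<bar>" using abs_sin_ge[of "\<theta>+\<phi>"] unfolding DI_def
        by (simp add: add_divide_distrib)
      then have "K*DI \<theta> \<le> K*\<bar>sin (\<theta> + \<phi>)\<bar>" using Kp by simp
      also have "\<dots> = Y*\<bar>cI\<bar>*A" unfolding K_def cI_def using r by (simp add: abs_mult)
      finally show "K*DI \<theta> \<le> Y*\<bar>cI\<bar>*A" .
    qed
    also have "Y*(B-A)/(Y*\<bar>cR\<bar>*A+1) \<le> Y*(B-A)*(1/(K*DR \<theta>+1))"
    proof (rule div_helper[OF c0])
      show "0 \<le> K*DR \<theta>" using Kp dnint_nonneg unfolding DR_def by simp
      have s: "sin (\<theta> + \<phi> + pi/2) = cos (\<theta> + \<phi>)" by (simp add: sin_add)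
      have "DR \<theta> \<le> \<bar>cos (\<theta> + \<phi>)\<bar>" using abs_sin_ge[of "\<theta>+\<phi>+pi/2"] unfolding DR_def s
        by (simp add: add_divide_distrib add.assoc)
      then have "K*DR \<theta> \<le> K*\<bar>cos (\<theta> + \<phi>)\<bar>" using Kp by simp
      also have "\<dots> = Y*\<bar>cR\<bar>*A" unfolding K_def cR_def using r by (simp add: abs_mult)
      finally show "K*DR \<theta> \<le> Y*\<bar>cR\<bar>*A" .
    qed
    finally show ?thesis unfolding J_def by simp
  qed
  have hI: "continuous_on {-pi..pi} (\<lambda>\<theta>. 1/(K*DI \<theta>+1))" unfolding DI_def by (rule hcont[OF Kp])
  have hR: "continuous_on {-pi..pi} (\<lambda>\<theta>. 1/(K*DR \<theta>+1))" unfolding DR_def by (rule hcont[OF Kp])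
  have h0: "0 \<le> 1/(K*dnint x+1)" for x using mult_nonneg_nonneg[OF less_imp_le[OF Kp] dnint_nonneg[of x]] by simp
  have "(LBINT \<theta>=-pi..pi. (LBINT R=A..B.
        sqrt (minY Y (Im (z * of_real R * cis \<theta>))) *
        sqrt (minY Y (Re (z * of_real R * cis \<theta>))))) \<le> integral {-pi..pi} J"
  proof (rule lbint_le)
    show "-pi \<le> pi" by simp
    show "continuous_on {-pi..pi} J" unfolding J_def using hI hR by (intro continuous_on_add continuous_on_mult_left continuous_on_const)
    show "\<forall>x\<in>{-pi..pi}. 0 \<le> J x" unfolding J_def DI_def DR_def using c0 h0 Y A AB
      by (auto intro!: add_nonneg_nonneg mult_nonneg_nonneg)
  qed (use pw in auto)
  also have "integral {-pi..pi} J = Y*(B-A)*integral {-pi..pi} (\<lambda>\<theta>. 1/(K*DI \<theta>+1))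
      + Y*(B-A)*integral {-pi..pi} (\<lambda>\<theta>. 1/(K*DR \<theta>+1)) + 2*pi*(20*B*ln(1+Y/2))"
  proof -
    define fI where "fI = (\<lambda>\<theta>. 1/(K*DI \<theta>+1))"
    define fR where "fR = (\<lambda>\<theta>. 1/(K*DR \<theta>+1))"
    define c where "c = Y*(B-A)"
    define d where "d = 20*B*ln(1+Y/2)"
    have i1: "(\<lambda>\<theta>. c * fI \<theta>) integrable_on {-pi..pi}"
      unfolding fI_def by (intro integrable_continuous_real continuous_on_mult_left hI)
    have i2: "(\<lambda>\<theta>. c * fR \<theta>) integrable_on {-pi..pi}"
      unfolding fR_def by (intro integrable_continuous_real continuous_on_mult_left hR)
    have i3: "(\<lambda>\<theta>. c * fI \<theta> + c * fR \<theta>) integrable_on {-pi..pi}"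
      by (rule integrable_add[OF i1 i2])
    have i4: "(\<lambda>\<theta>. d) integrable_on {-pi..pi}" by (rule integrable_continuous_real[OF continuous_on_const])
    have "integral {-pi..pi} J = integral {-pi..pi} (\<lambda>\<theta>. (c * fI \<theta> + c * fR \<theta>) + d)"
      unfolding J_def fI_def fR_def c_def d_def by simp
    also have "\<dots> = integral {-pi..pi} (\<lambda>\<theta>. c * fI \<theta> + c * fR \<theta>) + integral {-pi..pi} (\<lambda>\<theta>. d)"
      by (rule integral_add[OF i3 i4])
    also have "integral {-pi..pi} (\<lambda>\<theta>. c * fI \<theta> + c * fR \<theta>) = integral {-pi..pi} (\<lambda>\<theta>. c * fI \<theta>) + integral {-pi..pi} (\<lambda>\<theta>. c * fR \<theta>)"
      by (rule integral_add[OF i1 i2])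
    also have "integral {-pi..pi} (\<lambda>\<theta>. c * fI \<theta>) = c * integral {-pi..pi} fI" by (rule integral_mult_right)
    also have "integral {-pi..pi} (\<lambda>\<theta>. c * fR \<theta>) = c * integral {-pi..pi} fR" by (rule integral_mult_right)
    also have "integral {-pi..pi} (\<lambda>\<theta>. d) = 2*pi*d" by simp
    finally show ?thesis unfolding fI_def fR_def c_def d_def .
  qed
  also have "\<dots> \<le> 2*(Y*(B-A)*((pi - -pi + 2/(1/pi))*(2*ln(1+K/2)/K))) + 2*pi*(20*B*ln(1+Y/2))"
  proof -
    have p: "0 < 1/pi" by simp
    have "integral {-pi..pi} (\<lambda>\<theta>. 1/(K*DI \<theta>+1)) \<le> (pi - -pi + 2/(1/pi))*(2*ln(1+K/2)/K)"
      unfolding DI_def by (rule periodic_bound[OF p Kp]) simp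
    moreover have "integral {-pi..pi} (\<lambda>\<theta>. 1/(K*DR \<theta>+1)) \<le> (pi - -pi + 2/(1/pi))*(2*ln(1+K/2)/K)"
      unfolding DR_def by (rule periodic_bound[OF p Kp]) simp
    ultimately show ?thesis using c0 by (smt (verit) mult_left_mono)
  qed
  also have "\<dots> \<le> (16*pi*(B-A)/A*(A/ln 2 + 1) + 40*pi*B) * max 1 (1/r) * ln(2+Y)"
    by (rule final_arith[OF A AB Y r K_def])
  finally show "(LBINT \<theta>=-pi..pi. (LBINT R=A..B.
        sqrt (minY Y (Im (z * of_real R * cis \<theta>))) *
        sqrt (minY Y (Re (z * of_real R * cis \<theta>)))))
    \<le> (16*pi*(B-A)/A*(A/ln 2 + 1) + 40*pi*B) * max 1 (1 / cmod z) * ln (2 + Y)"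
    unfolding r_def .
qed


end
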